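(* Let $\mathcal G$ be a doubly connected molecular graph, and let $\mathcal M_1,\mathcal M_2,\mathcal M_3$ be any three molecules of $\mathcal G$. Construct $\mathcal G_{new}$ from $\mathcal G$ by adding a new molecule $\mathcal M_{new}$, a diffusive edge $b_1$ joining $\mathcal M_{new}$ and $\mathcal M_1$, a blue solid edge $b_2$ joining $\mathcal M_{new}$ and $\mathcal M_2$, and a blue solid edge $b_3$ joining $\mathcal M_{new}$ and $\mathcal M_3$. Then the blue solid edges $b_2$ and $b_3$ are both redundant in $\mathcal G_{new}$.
   Context: A molecular graph is a finite multigraph whose vertices are called molecules and each of whose edges joins two distinct molecules and is either a diffusive edge or a blue solid edge (parallel edges are allowed). A molecular graph is doubly connected if there exist two disjoint sets of edges, $\mathcal B_{black}$ consisting only of diffusive edges and $\mathcal B_{blue}$ consisting only of blue solid or diffusive edges, such that each of $\mathcal B_{black}$ and $\mathcal B_{blue}$ contains a spanning tree of the set of all molecules. A blue solid edge $e$ of a doubly connected graph is redundant if the graph obtained by deleting $e$ is still doubly connected. *)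

theory Defs
  imports Main
begin

text \<open>Molecular graphs: a finite vertex set V (molecules), a finite edge set E,
  an endpoint map ends (each edge joins the two molecules ends e; orientation is
  irrelevant) and an edge kind.\<close>

datatype edge_kind = Diffusive | BlueSolid

definition molecular_graph ::
  "'v set \<Rightarrow> 'e set \<Rightarrow> ('e \<Rightarrow> 'v \<times> 'v) \<Rightarrow> ('e \<Rightarrow> edge_kind) \<Rightarrow> bool" where
  "molecular_graph V E ends kind \<longleftrightarrow>
     finite V \<and> finite E \<and>
     (\<forall>e\<in>E. fst (ends e) \<in> V \<and> snd (ends e) \<in> V \<and> fst (ends e) \<noteq> snd (ends e))"

definition edge_rel :: "('e \<Rightarrow> 'v \<times> 'v) \<Rightarrow> 'e set \<Rightarrow> ('v \<times> 'v) set" where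
  "edge_rel ends F = {(a, b). \<exists>e\<in>F. ends e = (a, b) \<or> ends e = (b, a)}"

definition spans_connected :: "'v set \<Rightarrow> ('e \<Rightarrow> 'v \<times> 'v) \<Rightarrow> 'e set \<Rightarrow> bool" where
  "spans_connected V ends F \<longleftrightarrow> (\<forall>u\<in>V. \<forall>v\<in>V. (u, v) \<in> (edge_rel ends F)\<^sup>*)"

definition spanning_tree :: "'v set \<Rightarrow> ('e \<Rightarrow> 'v \<times> 'v) \<Rightarrow> 'e set \<Rightarrow> bool" where
  "spanning_tree V ends T \<longleftrightarrow>
     spans_connected V ends T \<and> (\<forall>e\<in>T. \<not> spans_connected V ends (T - {e}))"

definition contains_spanning_tree :: "'v set \<Rightarrow> ('e \<Rightarrow> 'v \<times> 'v) \<Rightarrow> 'e set \<Rightarrow> bool" where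
  "contains_spanning_tree V ends F \<longleftrightarrow> (\<exists>T\<subseteq>F. spanning_tree V ends T)"

definition doubly_connected ::
  "'v set \<Rightarrow> 'e set \<Rightarrow> ('e \<Rightarrow> 'v \<times> 'v) \<Rightarrow> ('e \<Rightarrow> edge_kind) \<Rightarrow> bool" where
  "doubly_connected V E ends kind \<longleftrightarrow>
     (\<exists>Bblack Bblue. Bblack \<subseteq> E \<and> Bblue \<subseteq> E \<and> Bblack \<inter> Bblue = {} \<and>
        (\<forall>e\<in>Bblack. kind e = Diffusive) \<and>
        (\<forall>e\<in>Bblue. kind e = BlueSolid \<or> kind e = Diffusive) \<and>
        contains_spanning_tree V ends Bblack \<and> contains_spanning_tree V ends Bblue)"

definition redundant ::
  "'v set \<Rightarrow> 'e set \<Rightarrow> ('e \<Rightarrow> 'v \<times> 'v) \<Rightarrow> ('e \<Rightarrow> edge_kind) \<Rightarrow> 'e \<Rightarrow> bool" where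
  "redundant V E ends kind e \<longleftrightarrow>
     doubly_connected V E ends kind \<and> e \<in> E \<and> kind e = BlueSolid \<and>
     doubly_connected V (E - {e}) ends kind"

end

theory Submission
  imports Defs
begin

lemma edge_rel_mono: "F \<subseteq> G \<Longrightarrow> edge_rel ends F \<subseteq> edge_rel ends G"
  unfolding edge_rel_def by auto

lemma spans_mono: "spans_connected V ends F \<Longrightarrow> F \<subseteq> G \<Longrightarrow> spans_connected V ends G"
  unfolding spans_connected_def by (meson edge_rel_mono rtrancl_mono subsetD)

lemma cst_imp_spans: "contains_spanning_tree V ends F \<Longrightarrow> spans_connected V ends F"
  unfolding contains_spanning_tree_def spanning_tree_def by (meson spans_mono)
lemma spans_imp_cst:
  assumes "finite F" "spans_connected V ends F"
  shows "contains_spanning_tree V ends F"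
proof -
  let ?P = "\<lambda>T. T \<subseteq> F \<and> spans_connected V ends T"
  have "?P F" using assms by blast
  then obtain T where T: "?P T" and min: "\<And>T'. ?P T' \<Longrightarrow> card T \<le> card T'"
    using ex_has_least_nat[of ?P F card] by blast
  have fT: "finite T" using T assms(1) finite_subset by blast
  have "\<not> spans_connected V ends (T - {e})" if "e \<in> T" for e
  proof
    assume "spans_connected V ends (T - {e})"
    hence "card T \<le> card (T - {e})" using min T by blast
    moreover have "card (T - {e}) < card T" by (rule card_Diff1_less[OF fT that])
    ultimately show False by simp
  qed
  thus ?thesis unfolding contains_spanning_tree_def spanning_tree_def using T by blast
qed

lemma edge_rel_cong: "\<forall>e\<in>F. ends e = ends' e \<Longrightarrow> edge_rel ends F = edge_rel ends' F"
  unfolding edge_rel_def by auto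

lemma spans_ext:
  assumes "spans_connected V ends F" "ends b = (x, m)" "m \<in> V"
  shows "spans_connected (insert x V) ends (insert b F)"
proof -
  let ?R = "(edge_rel ends (insert b F))\<^sup>*"
  have sub: "(edge_rel ends F)\<^sup>* \<subseteq> ?R" by (intro rtrancl_mono edge_rel_mono) blast
  have xm: "(x, m) \<in> ?R" "(m, x) \<in> ?R" using assms(2) unfolding edge_rel_def by auto
  have V: "(u, v) \<in> ?R" if "u \<in> V" "v \<in> V" for u v
    using assms(1) that sub unfolding spans_connected_def by blast
  show ?thesis unfolding spans_connected_def
  proof (intro ballI)
    fix u v assume u: "u \<in> insert x V" and v: "v \<in> insert x V"
    have ux: "(u, m) \<in> ?R" using u xm V[of u m] assms(3) by auto
    have vx: "(m, v) \<in> ?R" using v xm V[of m v] assms(3) by auto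
    show "(u, v) \<in> ?R" using ux vx by (rule rtrancl_trans)
  qed
qed

lemma dc_mono: "doubly_connected V E ends kind \<Longrightarrow> E \<subseteq> E' \<Longrightarrow> doubly_connected V E' ends kind"
  unfolding doubly_connected_def by (meson order_trans)

lemma dc_ext:
  assumes mg: "molecular_graph V E ends kind" and dc: "doubly_connected V E ends kind"
    and x: "x \<notin> V" and m1: "m1 \<in> V" and m: "m \<in> V"
    and b: "b \<notin> E" and c: "c \<notin> E" and bc: "b \<noteq> c"
    and eb: "ends' b = (x, m1)" and ec: "ends' c = (x, m)"
    and kb: "kind' b = Diffusive" and kc: "kind' c = BlueSolid"
    and agree: "\<forall>e\<in>E. ends' e = ends e \<and> kind' e = kind e"
  shows "doubly_connected (insert x V) (insert b (insert c E)) ends' kind'"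
proof -
  have fE: "finite E" using mg unfolding molecular_graph_def by blast
  obtain Bk Bu where Bk: "Bk \<subseteq> E" and Bu: "Bu \<subseteq> E" and dis: "Bk \<inter> Bu = {}"
    and kk: "\<forall>e\<in>Bk. kind e = Diffusive"
    and ku: "\<forall>e\<in>Bu. kind e = BlueSolid \<or> kind e = Diffusive"
    and ck: "contains_spanning_tree V ends Bk" and cu: "contains_spanning_tree V ends Bu"
    using dc unfolding doubly_connected_def by blast
  have sk: "spans_connected V ends' Bk"
  proof -
    have "edge_rel ends Bk = edge_rel ends' Bk"
      by (rule edge_rel_cong) (use Bk agree in auto)
    thus ?thesis using cst_imp_spans[OF ck] unfolding spans_connected_def by simp
  qed
  have su: "spans_connected V ends' Bu"
  proof -
    have "edge_rel ends Bu = edge_rel ends' Bu"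
      by (rule edge_rel_cong) (use Bu agree in auto)
    thus ?thesis using cst_imp_spans[OF cu] unfolding spans_connected_def by simp
  qed
  have fk: "finite (insert b Bk)" using fE Bk finite_subset by blast
  have fu: "finite (insert c Bu)" using fE Bu finite_subset by blast
  have c1: "contains_spanning_tree (insert x V) ends' (insert b Bk)"
    by (rule spans_imp_cst[OF fk spans_ext[OF sk eb m1]])
  have c2: "contains_spanning_tree (insert x V) ends' (insert c Bu)"
    by (rule spans_imp_cst[OF fu spans_ext[OF su ec m]])
  show ?thesis unfolding doubly_connected_def
    apply (rule exI[of _ "insert b Bk"], rule exI[of _ "insert c Bu"])
  proof (intro conjI)
    show "insert b Bk \<subseteq> insert b (insert c E)" using Bk by blast
    show "insert c Bu \<subseteq> insert b (insert c E)" using Bu by blast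
    show "insert b Bk \<inter> insert c Bu = {}" using Bk Bu dis b c bc by blast
    show "\<forall>e\<in>insert b Bk. kind' e = Diffusive" using Bk kk agree kb by auto
    show "\<forall>e\<in>insert c Bu. kind' e = BlueSolid \<or> kind' e = Diffusive"
    proof
      fix e assume "e \<in> insert c Bu"
      thus "kind' e = BlueSolid \<or> kind' e = Diffusive" by (cases "kind' e") auto
    qed
  qed (use c1 c2 in auto)
qed

theorem claimA6:
  fixes V :: "'v set" and E :: "'e set" and ends :: "'e \<Rightarrow> 'v \<times> 'v"
    and kind :: "'e \<Rightarrow> edge_kind"
    and M1 M2 M3 Mnew :: 'v and b1 b2 b3 :: 'e
  assumes "molecular_graph V E ends kind"
    and "doubly_connected V E ends kind"
    and "M1 \<in> V" and "M2 \<in> V" and "M3 \<in> V"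
    and "Mnew \<notin> V"
    and "b1 \<notin> E" and "b2 \<notin> E" and "b3 \<notin> E"
    and "b1 \<noteq> b2" and "b1 \<noteq> b3" and "b2 \<noteq> b3"
  shows "redundant (insert Mnew V) (E \<union> {b1, b2, b3})
            (ends(b1 := (Mnew, M1), b2 := (Mnew, M2), b3 := (Mnew, M3)))
            (kind(b1 := Diffusive, b2 := BlueSolid, b3 := BlueSolid)) b2
       \<and> redundant (insert Mnew V) (E \<union> {b1, b2, b3})
            (ends(b1 := (Mnew, M1), b2 := (Mnew, M2), b3 := (Mnew, M3)))
            (kind(b1 := Diffusive, b2 := BlueSolid, b3 := BlueSolid)) b3"
proof -
  let ?en = "ends(b1 := (Mnew, M1), b2 := (Mnew, M2), b3 := (Mnew, M3))"
  let ?kn = "kind(b1 := Diffusive, b2 := BlueSolid, b3 := BlueSolid)"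
  have agree: "\<forall>e\<in>E. ?en e = ends e \<and> ?kn e = kind e" using assms(7-9) by auto
  have d2: "doubly_connected (insert Mnew V) (insert b1 (insert b3 E)) ?en ?kn"
    by (rule dc_ext[OF assms(1,2,6,3,5,7,9,11) _ _ _ _ agree]) (use assms(10-12) in auto)
  have d3: "doubly_connected (insert Mnew V) (insert b1 (insert b2 E)) ?en ?kn"
    by (rule dc_ext[OF assms(1,2,6,3,4,7,8,10) _ _ _ _ agree]) (use assms(10-12) in auto)
  have e2: "E \<union> {b1, b2, b3} - {b2} = insert b1 (insert b3 E)" using assms(8,10,12) by auto
  have e3: "E \<union> {b1, b2, b3} - {b3} = insert b1 (insert b2 E)" using assms(9,11,12) by auto
  have f2: "doubly_connected (insert Mnew V) (E \<union> {b1, b2, b3}) ?en ?kn"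
    by (rule dc_mono[OF d2]) auto
  have k2: "?kn b2 = BlueSolid" using assms(10-12) by simp
  have k3: "?kn b3 = BlueSolid" by simp
  have i2: "b2 \<in> E \<union> {b1, b2, b3}" and i3: "b3 \<in> E \<union> {b1, b2, b3}" by blast+
  show ?thesis unfolding redundant_def e2 e3 using d2 d3 f2 k2 k3 i2 i3 by blast
qed

end
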